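(* Let $H$ be a graph and let $P_1, P_2$ be two internally vertex-disjoint paths in $H$ of the same length parity, both with endpoints $u$ and $v$, such that every internal vertex of $P_1$ and of $P_2$ has degree exactly $2$ in $H$. If $S$ is a minimum-size odd cycle transversal of $H$, then $S \cap (V(P_1) \cup V(P_2)) \subseteq \{u,v\}$.
   Context: An odd cycle transversal of $H$ is a set $S \subseteq V(H)$ such that $H - S$ is bipartite. *)

theory Defs
  imports Main
begin

definition graph :: "'a set \<Rightarrow> 'a set set \<Rightarrow> bool" where
  "graph V E \<longleftrightarrow> finite V \<and> (\<forall>e\<in>E. e \<subseteq> V \<and> card e = 2)"

definition degree :: "'a set set \<Rightarrow> 'a \<Rightarrow> nat" where
  "degree E v = card {e \<in> E. v \<in> e}"

definition is_path :: "'a set \<Rightarrow> 'a set set \<Rightarrow> 'a list \<Rightarrow> bool" where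
  "is_path V E p \<longleftrightarrow> p \<noteq> [] \<and> distinct p \<and> set p \<subseteq> V \<and>
     (\<forall>i. Suc i < length p \<longrightarrow> {p ! i, p ! Suc i} \<in> E)"

definition path_len :: "'a list \<Rightarrow> nat" where
  "path_len p = length p - 1"

definition internal_vertices :: "'a list \<Rightarrow> 'a set" where
  "internal_vertices p = set (butlast (tl p))"

definition bipartite :: "'a set \<Rightarrow> 'a set set \<Rightarrow> bool" where
  "bipartite V E \<longleftrightarrow> (\<exists>A B. A \<inter> B = {} \<and> A \<union> B = V \<and>
      (\<forall>e\<in>E. card (e \<inter> A) = 1 \<and> card (e \<inter> B) = 1))"

definition del_vertices_E :: "'a set set \<Rightarrow> 'a set \<Rightarrow> 'a set set" where
  "del_vertices_E E S = {e \<in> E. e \<inter> S = {}}"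

definition odd_cycle_transversal :: "'a set \<Rightarrow> 'a set set \<Rightarrow> 'a set \<Rightarrow> bool" where
  "odd_cycle_transversal V E S \<longleftrightarrow> S \<subseteq> V \<and> bipartite (V - S) (del_vertices_E E S)"

definition min_odd_cycle_transversal :: "'a set \<Rightarrow> 'a set set \<Rightarrow> 'a set \<Rightarrow> bool" where
  "min_odd_cycle_transversal V E S \<longleftrightarrow> odd_cycle_transversal V E S \<and>
     (\<forall>S'. odd_cycle_transversal V E S' \<longrightarrow> card S \<le> card S')"

end

theory Submission
  imports Defs
begin


definition proper :: "('a \<Rightarrow> bool) \<Rightarrow> 'a set set \<Rightarrow> 'a set \<Rightarrow> bool" where
  "proper f E S \<longleftrightarrow> (\<forall>e\<in>E. e \<inter> S = {} \<longrightarrow> (\<forall>a\<in>e. \<forall>b\<in>e. a \<noteq> b \<longrightarrow> f a \<noteq> f b))"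

lemma oct_iff:
  assumes "graph V E"
  shows "odd_cycle_transversal V E S \<longleftrightarrow> S \<subseteq> V \<and> (\<exists>f. proper f E S)"
proof
  assume h: "odd_cycle_transversal V E S"
  then obtain A B where AB: "A \<inter> B = {}" "A \<union> B = V - S"
    "\<forall>e\<in>del_vertices_E E S. card (e \<inter> A) = 1 \<and> card (e \<inter> B) = 1"
    unfolding odd_cycle_transversal_def bipartite_def by blast
  have "proper (\<lambda>x. x \<in> A) E S"
    unfolding proper_def
  proof (intro ballI impI)
    fix e a b assume e: "e \<in> E" "e \<inter> S = {}" and ab: "a \<in> e" "b \<in> e" "a \<noteq> b"
    have ed: "e \<in> del_vertices_E E S" using e unfolding del_vertices_E_def by auto
    have "e \<subseteq> V" using assms e unfolding graph_def by auto
    hence sub: "e \<subseteq> A \<union> B" using AB(2) e(2) by auto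
    have cA: "card (e \<inter> A) = 1" and cB: "card (e \<inter> B) = 1" using AB(3) ed by auto
    show "(a \<in> A) \<noteq> (b \<in> A)"
    proof
      assume eq: "(a \<in> A) = (b \<in> A)"
      show False
      proof (cases "a \<in> A")
        case True
        then have "{a,b} \<subseteq> e \<inter> A" using eq ab by auto
        moreover obtain z where "e \<inter> A = {z}" using cA card_1_singletonE by blast
        ultimately show False using ab by auto
      next
        case False
        then have "{a,b} \<subseteq> e \<inter> B" using eq ab sub by auto
        moreover obtain z where "e \<inter> B = {z}" using cB card_1_singletonE by blast
        ultimately show False using ab by auto
      qed
    qed
  qed
  then show "S \<subseteq> V \<and> (\<exists>f. proper f E S)" using h unfolding odd_cycle_transversal_def by blast
next
  assume "S \<subseteq> V \<and> (\<exists>f. proper f E S)"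
  then obtain f where S: "S \<subseteq> V" and f: "proper f E S" by blast
  define A where "A = {x \<in> V - S. f x}"
  define B where "B = {x \<in> V - S. \<not> f x}"
  have "\<forall>e\<in>del_vertices_E E S. card (e \<inter> A) = 1 \<and> card (e \<inter> B) = 1"
  proof
    fix e assume "e \<in> del_vertices_E E S"
    then have e: "e \<in> E" "e \<inter> S = {}" unfolding del_vertices_E_def by auto
    then have "e \<subseteq> V" "card e = 2" using assms unfolding graph_def by auto
    then obtain a b where ab: "e = {a,b}" "a \<noteq> b" by (meson card_2_iff)
    have "f a \<noteq> f b" using f e ab unfolding proper_def by auto
    moreover have "a \<in> V - S" "b \<in> V - S" using \<open>e \<subseteq> V\<close> e ab by auto
    ultimately have "(e \<inter> A = {a} \<and> e \<inter> B = {b}) \<or> (e \<inter> A = {b} \<and> e \<inter> B = {a})"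
    proof (cases "f a")
      case True
      then have "a \<in> A" "b \<notin> A" "b \<in> B" "a \<notin> B" using \<open>f a \<noteq> f b\<close> \<open>a \<in> V - S\<close> \<open>b \<in> V - S\<close> unfolding A_def B_def by auto
      then show ?thesis unfolding ab(1) by auto
    next
      case False
      then have "b \<in> A" "a \<notin> A" "a \<in> B" "b \<notin> B" using \<open>f a \<noteq> f b\<close> \<open>a \<in> V - S\<close> \<open>b \<in> V - S\<close> unfolding A_def B_def by auto
      then show ?thesis unfolding ab(1) by auto
    qed
    then show "card (e \<inter> A) = 1 \<and> card (e \<inter> B) = 1" by auto
  qed
  moreover have "A \<inter> B = {}" "A \<union> B = V - S" unfolding A_def B_def by auto
  ultimately show "odd_cycle_transversal V E S"
    unfolding odd_cycle_transversal_def bipartite_def using S by blast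
qed

lemma interior_iff:
  "w \<in> internal_vertices P \<longleftrightarrow> (\<exists>i. 0<i \<and> i < length P - 1 \<and> w = P!i)"
proof
  assume "w \<in> internal_vertices P"
  then obtain k where k: "k < length (butlast (tl P))" "butlast (tl P) ! k = w"
    unfolding internal_vertices_def in_set_conv_nth by blast
  have "Suc k < length P - 1" using k(1) by simp
  moreover have "w = P ! Suc k" using k by (simp add: nth_butlast nth_tl)
  ultimately show "\<exists>i. 0<i \<and> i < length P - 1 \<and> w = P!i" by blast
next
  assume "\<exists>i. 0<i \<and> i < length P - 1 \<and> w = P!i"
  then obtain i where i: "0<i" "i < length P - 1" "w = P!i" by blast
  obtain k where k: "i = Suc k" using i(1) gr0_implies_Suc by blast
  have "k < length (butlast (tl P))" using i k by simp
  moreover have "butlast (tl P) ! k = w" using i k \<open>k < length (butlast (tl P))\<close>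
    by (simp add: nth_butlast nth_tl)
  ultimately show "w \<in> internal_vertices P"
    unfolding internal_vertices_def in_set_conv_nth by blast
qed

lemma set_path:
  assumes "P \<noteq> []" "x \<in> set P"
  shows "x = hd P \<or> x = last P \<or> x \<in> internal_vertices P"
proof -
  obtain i where i: "i < length P" "x = P!i" using assms by (auto simp: in_set_conv_nth)
  show ?thesis
  proof (cases "i = 0")
    case True then show ?thesis using i assms by (simp add: hd_conv_nth)
  next
    case False
    show ?thesis
    proof (cases "i = length P - 1")
      case True then show ?thesis using i assms by (simp add: last_conv_nth)
    next
      case False2: False
      then show ?thesis using False i interior_iff[of x P] by auto
    qed
  qed
qed

lemma edge_class:
  assumes "graph V E" "is_path V E P" "0<j" "j<length P - 1" "degree E (P!j) = 2"
    "e\<in>E" "P!j \<in> e"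
  shows "e = {P!(j-1),P!j} \<or> e = {P!j,P!Suc j}"
proof -
  have fE: "finite E"
  proof -
    have "E \<subseteq> Pow V" using assms(1) unfolding graph_def by auto
    moreover have "finite V" using assms(1) unfolding graph_def by auto
    ultimately show ?thesis by (meson finite_Pow_iff rev_finite_subset)
  qed
  have d: "distinct P" and pe: "\<forall>i. Suc i < length P \<longrightarrow> {P ! i, P ! Suc i} \<in> E"
    using assms(2) unfolding is_path_def by auto
  have j1: "Suc (j-1) = j" using assms(3) by simp
  have "Suc (j-1) < length P" using assms(3,4) by simp
  then have "{P!(j-1),P!Suc (j-1)} \<in> E" using pe by blast
  then have e1: "{P!(j-1),P!j} \<in> E" by (simp only: j1)
  have e2: "{P!j,P!Suc j} \<in> E" using pe assms(4) by simp
  have ne: "P!(j-1) \<noteq> P!Suc j" "P!(j-1) \<noteq> P!j"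
    using d assms(3,4) by (simp_all add: nth_eq_iff_index_eq)
  have ne2: "{P!(j-1),P!j} \<noteq> {P!j,P!Suc j}"
  proof
    assume "{P!(j-1),P!j} = {P!j,P!Suc j}"
    then have "P!(j-1) \<in> {P!j,P!Suc j}" by blast
    then show False using ne by blast
  qed
  have sub: "{{P!(j-1),P!j}, {P!j,P!Suc j}} \<subseteq> {e \<in> E. P!j \<in> e}" using e1 e2 by blast
  have c2: "card {{P!(j-1),P!j}, {P!j,P!Suc j}} = 2" using ne2 by simp
  have fin: "finite {e \<in> E. P!j \<in> e}" using fE by simp
  have "card {e \<in> E. P!j \<in> e} = 2" using assms(5) unfolding degree_def .
  then have "{{P!(j-1),P!j}, {P!j,P!Suc j}} = {e \<in> E. P!j \<in> e}"
    using card_seteq[OF fin sub] c2 by linarith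
  then show ?thesis using assms(6,7) by blast
qed

definition idx :: "'a list \<Rightarrow> 'a \<Rightarrow> nat" where
  "idx P w = (THE i. i < length P \<and> P!i = w)"

lemma idx_nth: "distinct P \<Longrightarrow> i < length P \<Longrightarrow> idx P (P!i) = i"
  unfolding idx_def by (rule the_equality) (auto simp: nth_eq_iff_index_eq)

lemma path_ok:
  assumes "P \<noteq> []" "\<forall>i. 0<i \<and> i<length P - 1 \<longrightarrow> g(P!i) = (b \<noteq> odd i)" "g (P!0) = b"
    "P!(length P - 1) \<in> S' \<or> g (P!(length P - 1)) = (b \<noteq> odd (length P - 1))"
    "Suc i < length P" "{P!i, P!Suc i} \<inter> S' = {}"
  shows "g (P!i) \<noteq> g (P!Suc i)"
proof (cases "i = 0")
  case True
  then show ?thesis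
  proof (cases "Suc i = length P - 1")
    case True2: True
    have "P!Suc i \<notin> S'" using assms(6) by auto
    then have "g (P!Suc i) = (b \<noteq> odd (Suc i))" using assms(4) True2 by simp
    then show ?thesis using assms(3) True by simp
  next
    case False
    then show ?thesis using assms True by auto
  qed
next
  case False
  show ?thesis
  proof (cases "Suc i = length P - 1")
    case True2: True
    have "g (P!i) = (b \<noteq> odd i)" using assms(2) False True2 by auto
    moreover have "g (P!Suc i) = (b \<noteq> odd (Suc i))" using assms(4,6) True2 by auto
    ultimately show ?thesis by auto
  next
    case False2: False
    have "g (P!i) = (b \<noteq> odd i)" using assms(2,5) False by auto
    moreover have "g (P!Suc i) = (b \<noteq> odd (Suc i))" using assms(2,5) False2 by auto
    ultimately show ?thesis by auto
  qed
qed



lemma tl_rev': "tl (rev xs) = rev (butlast xs)"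
  using butlast_rev[of "rev xs"] by simp

lemma int_rev: "internal_vertices (rev P) = internal_vertices P"
  unfolding internal_vertices_def
  by (simp add: tl_rev' butlast_tl)

lemma path_rev: "is_path V E P \<Longrightarrow> is_path V E (rev P)"
  unfolding is_path_def
proof (intro conjI allI impI; (elim conjE)?)
  fix i assume h: "P \<noteq> []" "distinct P" "set P \<subseteq> V"
    "\<forall>i. Suc i < length P \<longrightarrow> {P ! i, P ! Suc i} \<in> E" and i: "Suc i < length (rev P)"
  define k where "k = length P - 2 - i"
  have k1: "Suc k < length P" using i unfolding k_def by simp
  have a: "rev P ! i = P ! Suc k" using i unfolding k_def by (simp add: rev_nth Suc_diff_Suc)
  have b: "rev P ! Suc i = P ! k" using i unfolding k_def by (simp add: rev_nth)
  show "{rev P ! i, rev P ! Suc i} \<in> E" using h(4) k1 unfolding a b by (simp add: insert_commute)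
qed auto



lemma walk:
  assumes "is_path V E Q" "proper f E S" "set Q \<inter> S = {}"
  shows "i < length Q \<Longrightarrow> f (Q!i) = (f (Q!0) \<noteq> odd i)"
proof (induction i)
  case 0 then show ?case by simp
next
  case (Suc i)
  have e: "{Q!i, Q!Suc i} \<in> E" using assms(1) Suc.prems unfolding is_path_def by blast
  have ne: "Q!i \<noteq> Q!Suc i" using assms(1) Suc.prems unfolding is_path_def
    by (simp add: nth_eq_iff_index_eq)
  have "Q!i \<in> set Q" "Q!Suc i \<in> set Q" using Suc.prems by simp_all
  then have "{Q!i, Q!Suc i} \<inter> S = {}" using assms(3) by blast
  then have "f (Q!i) \<noteq> f (Q!Suc i)" using assms(2) e ne unfolding proper_def by blast
  moreover have "f (Q!i) = (f (Q!0) \<noteq> odd i)" using Suc by simp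
  ultimately show ?case by auto
qed

lemma path_basic:
  assumes "is_path V E P" "hd P = u" "last P = v"
  shows "P \<noteq> []" "distinct P" "P!0 = u" "P!(length P - 1) = v"
    "u \<notin> internal_vertices P" "v \<notin> internal_vertices P"
    "internal_vertices P \<subseteq> set P" "u \<in> set P" "v \<in> set P"
proof -
  show ne: "P \<noteq> []" and d: "distinct P" using assms(1) unfolding is_path_def by auto
  show u: "P!0 = u" using ne assms(2) by (simp add: hd_conv_nth)
  show v: "P!(length P - 1) = v" using ne assms(3) by (simp add: last_conv_nth)
  show "u \<notin> internal_vertices P"
  proof
    assume "u \<in> internal_vertices P"
    then obtain i where "0<i" "i<length P - 1" "u = P!i" using interior_iff by metis
    then show False using u d ne by (simp add: nth_eq_iff_index_eq)
  qed
  show "v \<notin> internal_vertices P"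
  proof
    assume "v \<in> internal_vertices P"
    then obtain i where "0<i" "i<length P - 1" "v = P!i" using interior_iff by metis
    then show False using v d ne by (simp add: nth_eq_iff_index_eq)
  qed
  show "internal_vertices P \<subseteq> set P"
    using interior_iff[of _ P] by auto
  show "u \<in> set P" "v \<in> set P" using ne assms(2,3) by auto
qed



lemma core:
  fixes V :: "'a set" and E :: "'a set set" and P1 P2 :: "'a list" and u v :: 'a and S :: "'a set"
  assumes G: "graph V E"
    and p1: "is_path V E P1" and p2: "is_path V E P2"
    and h1: "hd P1 = u" and l1: "last P1 = v" and h2: "hd P2 = u" and l2: "last P2 = v"
    and d1: "internal_vertices P1 \<inter> set P2 = {}" and d2: "internal_vertices P2 \<inter> set P1 = {}"
    and par0: "even (path_len P1) = even (path_len P2)"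
    and deg: "\<forall>x \<in> internal_vertices P1 \<union> internal_vertices P2. degree E x = 2"
    and mn: "min_odd_cycle_transversal V E S"
    and uv: "u \<in> S \<longrightarrow> v \<in> S"
  shows "S \<inter> (set P1 \<union> set P2) \<subseteq> {u, v}"
proof (rule ccontr)
  assume "\<not> ?thesis"
  then obtain x where xS: "x \<in> S" and xP: "x \<in> set P1 \<union> set P2" and xuv: "x \<notin> {u,v}" by blast
  define I1 where "I1 = internal_vertices P1"
  define I2 where "I2 = internal_vertices P2"
  define I where "I = I1 \<union> I2"
  note b1 = path_basic[OF p1 h1 l1]
  note b2 = path_basic[OF p2 h2 l2]
  have par: "odd (length P1 - 1) = odd (length P2 - 1)" using par0 unfolding path_len_def by simp
  have "odd_cycle_transversal V E S" using mn unfolding min_odd_cycle_transversal_def by blast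
  then obtain f where SV: "S \<subseteq> V" and f: "proper f E S" using oct_iff[OF G] by blast
  have finS: "finite S" using SV G unfolding graph_def by (meson rev_finite_subset)
  have xI: "x \<in> I"
    using xP xuv set_path[OF b1(1), of x] set_path[OF b2(1), of x] h1 l1 h2 l2
    unfolding I_def I1_def I2_def by auto
  have uI: "u \<notin> I" and vI: "v \<notin> I" using b1 b2 d2 unfolding I_def I1_def I2_def by auto
  have I12: "I1 \<inter> I2 = {}" using d1 b2(7) unfolding I1_def I2_def by auto
  define g where "g w = (if w \<in> I1 then f u \<noteq> odd (idx P1 w)
      else if w \<in> I2 then f u \<noteq> odd (idx P2 w) else f w)" for w
  have KC: "odd_cycle_transversal V E S'"
    if S'1: "S - I \<subseteq> S'" and S'2: "S' \<subseteq> V"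
      and S'3: "v \<in> S' \<or> f v = (f u \<noteq> odd (length P1 - 1))" for S'
  proof -
    have gu: "g u = f u" and gv: "g v = f v" using uI vI unfolding g_def I_def by auto
    have ok1: "g (P1!i) \<noteq> g (P1!Suc i)"
      if "Suc i < length P1" "{P1!i, P1!Suc i} \<inter> S' = {}" for i
    proof (rule path_ok[where g=g and b="f u" and S'=S' and i=i, OF b1(1) _ _ _ that])
      show "\<forall>i. 0<i \<and> i<length P1 - 1 \<longrightarrow> g(P1!i) = (f u \<noteq> odd i)"
      proof (intro allI impI)
        fix i assume i: "0<i \<and> i<length P1 - 1"
        then have "P1!i \<in> I1" unfolding I1_def interior_iff by blast
        have "i < length P1" using i by linarith
        then have ix: "idx P1 (P1!i) = i" by (rule idx_nth[OF b1(2)])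
        then show "g(P1!i) = (f u \<noteq> odd i)" unfolding g_def using ix \<open>P1!i \<in> I1\<close> by simp
      qed
      show "g (P1!0) = f u" using b1(3) gu by simp
      show "P1!(length P1 - 1) \<in> S' \<or> g (P1!(length P1 - 1)) = (f u \<noteq> odd (length P1 - 1))"
        using S'3 b1(4) gv by simp
    qed
    have ok2: "g (P2!i) \<noteq> g (P2!Suc i)"
      if "Suc i < length P2" "{P2!i, P2!Suc i} \<inter> S' = {}" for i
    proof (rule path_ok[where g=g and b="f u" and S'=S' and i=i, OF b2(1) _ _ _ that])
      show "\<forall>i. 0<i \<and> i<length P2 - 1 \<longrightarrow> g(P2!i) = (f u \<noteq> odd i)"
      proof (intro allI impI)
        fix i assume i: "0<i \<and> i<length P2 - 1"
        then have "P2!i \<in> I2" unfolding I2_def interior_iff by blast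
        have "i < length P2" using i by linarith
        then have ix: "idx P2 (P2!i) = i" by (rule idx_nth[OF b2(2)])
        have "P2!i \<notin> I1" using I12 \<open>P2!i \<in> I2\<close> by blast
        then show "g(P2!i) = (f u \<noteq> odd i)" unfolding g_def using ix \<open>P2!i \<in> I2\<close> by simp
      qed
      show "g (P2!0) = f u" using b2(3) gu by simp
      show "P2!(length P2 - 1) \<in> S' \<or> g (P2!(length P2 - 1)) = (f u \<noteq> odd (length P2 - 1))"
        using S'3 by (simp only: b2(4) gv par[symmetric])
    qed
    have pe: "\<exists>P\<in>{P1,P2}. \<exists>i. Suc i < length P \<and> e = {P!i, P!Suc i}"
      if e: "e \<in> E" "w \<in> e" "w \<in> I" for e w
    proof -
      have "\<exists>P\<in>{P1,P2}. is_path V E P \<and> w \<in> internal_vertices P"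
        using e(3) p1 p2 unfolding I_def I1_def I2_def by auto
      then obtain P where P: "P\<in>{P1,P2}" "is_path V E P" "w \<in> internal_vertices P" by blast
      obtain j where j: "0<j" "j<length P - 1" "w = P!j" using P(3) interior_iff by metis
      have "degree E (P!j) = 2" using deg P(1,3) j(3) by auto
      then have "e = {P!(j-1),P!j} \<or> e = {P!j,P!Suc j}"
        using edge_class[OF G P(2) j(1,2) _ e(1)] e(2) j(3) by blast
      moreover have "Suc (j-1) = j" "Suc (j - 1) < length P" "Suc j < length P" using j by auto
      ultimately have "\<exists>i. Suc i < length P \<and> e = {P!i, P!Suc i}" by metis
      then show ?thesis using P(1) by blast
    qed
    have "proper g E S'"
      unfolding proper_def
    proof (intro ballI impI)
      fix e a b assume e: "e \<in> E" "e \<inter> S' = {}" and ab: "a \<in> e" "b \<in> e" "a \<noteq> b"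
      show "g a \<noteq> g b"
      proof (cases "e \<inter> I = {}")
        case True
        then have "e \<inter> S = {}" using e(2) S'1 by blast
        then have "f a \<noteq> f b" using f e(1) ab unfolding proper_def by blast
        moreover have "a \<notin> I" "b \<notin> I" using True ab by auto
        ultimately show ?thesis unfolding g_def I_def by auto
      next
        case False
        then obtain w where "w \<in> e" "w \<in> I" by blast
        then obtain P i where P: "P\<in>{P1,P2}" "Suc i < length P" "e = {P!i, P!Suc i}"
          using pe e(1) by blast
        have eS: "{P!i, P!Suc i} \<inter> S' = {}" using e(2) P(3) by simp
        have "g (P!i) \<noteq> g (P!Suc i)"
        proof (cases "P = P1")
          case True then show ?thesis using ok1[of i] P(2) eS by simp
        next
          case False then have "P = P2" using P(1) by simp
          then show ?thesis using ok2[of i] P(2) eS by simp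
        qed
        moreover have "(a = P!i \<and> b = P!Suc i) \<or> (a = P!Suc i \<and> b = P!i)"
          using ab P(3) by blast
        ultimately show ?thesis by metis
      qed
    qed
    then show ?thesis using oct_iff[OF G] S'2 by blast
  qed
  have minc: "card S \<le> card S'" if "odd_cycle_transversal V E S'" for S'
    using mn that unfolding min_odd_cycle_transversal_def by blast
  have "S - I \<subset> S" using xS xI by blast
  then have lt: "card (S - I) < card S" using psubset_card_mono[OF finS] by blast
  have SIV: "S - I \<subseteq> V" using SV by blast
  show False
  proof (cases "v \<in> S")
    case True
    then have "v \<in> S - I" using vI by blast
    then have "odd_cycle_transversal V E (S - I)" using KC[OF subset_refl SIV] by blast
    then have "card S \<le> card (S - I)" by (rule minc)
    then show False using lt by linarith
  next
    case vS: False
    then have uS: "u \<notin> S" using uv by blast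
    show False
    proof (cases "\<exists>y\<in>S\<inter>I. y \<noteq> x")
      case True
      then obtain y where y: "y \<in> S" "y \<in> I" "y \<noteq> x" by blast
      have vV: "v \<in> V" using b1(9) p1 unfolding is_path_def by blast
      have "S - I \<subseteq> insert v (S - I)" by blast
      moreover have "insert v (S - I) \<subseteq> V" using vV SIV by blast
      ultimately have "odd_cycle_transversal V E (insert v (S - I))"
        using KC[of "insert v (S - I)"] by blast
      then have c1: "card S \<le> card (insert v (S - I))" by (rule minc)
      have fSI: "finite (S - I)" using finS by blast
      have c2: "card (insert v (S - I)) \<le> Suc (card (S - I))"
        using fSI by (simp add: card_insert_if)
      have "S - I \<subseteq> S - {x,y}" using xI y by blast
      then have c3: "card (S - I) \<le> card (S - {x,y})" using finS by (simp add: card_mono)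
      have xyS: "{x,y} \<subseteq> S" using xS y by blast
      have c4: "card (S - {x,y}) = card S - card {x,y}"
        using card_Diff_subset[OF _ xyS] by simp
      have c5: "card {x,y} = 2" using y(3) by simp
      have "card {x,y} \<le> card S" using card_mono[OF finS xyS] .
      then show False using c1 c2 c3 c4 c5 by linarith
    next
      case False
      then have SI: "S \<inter> I \<subseteq> {x}" by blast
      have "\<exists>Q. set Q \<inter> S = {} \<and> is_path V E Q \<and> hd Q = u \<and> last Q = v
              \<and> odd (length Q - 1) = odd (length P1 - 1)"
      proof (cases "x \<in> I1")
        case True
        have "x \<notin> set P2" using True d1 unfolding I1_def by blast
        moreover have "set P2 \<subseteq> {u,v} \<union> I2" using set_path[OF b2(1)] h2 l2 unfolding I2_def by blast
        ultimately have "set P2 \<inter> S = {}" using SI uS vS unfolding I_def by blast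
        then show ?thesis using p2 h2 l2 par by (intro exI[of _ P2]) simp
      next
        case False
        then have "x \<in> I2" using xI unfolding I_def by blast
        then have "x \<notin> set P1" using d2 unfolding I2_def by blast
        moreover have "set P1 \<subseteq> {u,v} \<union> I1" using set_path[OF b1(1)] h1 l1 unfolding I1_def by blast
        ultimately have "set P1 \<inter> S = {}" using SI uS vS unfolding I_def by blast
        then show ?thesis using p1 h1 l1 by (intro exI[of _ P1]) simp
      qed
      then obtain Q where Q: "set Q \<inter> S = {}" "is_path V E Q" "hd Q = u" "last Q = v"
        "odd (length Q - 1) = odd (length P1 - 1)" by blast
      note bQ = path_basic[OF Q(2,3,4)]
      have "length Q - 1 < length Q" using bQ(1) by simp
      then have "f (Q!(length Q - 1)) = (f (Q!0) \<noteq> odd (length Q - 1))"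
        using walk[OF Q(2) f Q(1)] by blast
      then have "f v = (f u \<noteq> odd (length P1 - 1))" by (simp only: bQ(3) bQ(4) Q(5))
      then have "odd_cycle_transversal V E (S - I)" using KC[OF subset_refl SIV] by blast
      then have "card S \<le> card (S - I)" by (rule minc)
      then show False using lt by linarith
    qed
  qed
qed


theorem mainTheorem14:
  fixes V :: "'a set" and E :: "'a set set" and P1 P2 :: "'a list" and u v :: 'a and S :: "'a set"
  assumes "graph V E"
    and "is_path V E P1" and "is_path V E P2"
    and "hd P1 = u" and "last P1 = v" and "hd P2 = u" and "last P2 = v"
    and "internal_vertices P1 \<inter> set P2 = {}" and "internal_vertices P2 \<inter> set P1 = {}"
    and "even (path_len P1) = even (path_len P2)"
    and "\<forall>x \<in> internal_vertices P1 \<union> internal_vertices P2. degree E x = 2"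
    and "min_odd_cycle_transversal V E S"
  shows "S \<inter> (set P1 \<union> set P2) \<subseteq> {u, v}"
proof (cases "u \<in> S \<longrightarrow> v \<in> S")
  case True
  show ?thesis by (rule core[OF assms True])
next
  case False
  then have vS: "v \<notin> S" by blast
  have a4: "hd (rev P1) = v" using assms(5) by (simp add: hd_rev)
  have a5: "last (rev P1) = u" using assms(4) by (simp add: last_rev)
  have a6: "hd (rev P2) = v" using assms(7) by (simp add: hd_rev)
  have a7: "last (rev P2) = u" using assms(6) by (simp add: last_rev)
  have a8: "internal_vertices (rev P1) \<inter> set (rev P2) = {}" using assms(8) by (simp add: int_rev)
  have a9: "internal_vertices (rev P2) \<inter> set (rev P1) = {}" using assms(9) by (simp add: int_rev)
  have a10: "even (path_len (rev P1)) = even (path_len (rev P2))"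
    using assms(10) by (simp add: path_len_def)
  have a11: "\<forall>x \<in> internal_vertices (rev P1) \<union> internal_vertices (rev P2). degree E x = 2"
    using assms(11) by (simp add: int_rev)
  have "v \<in> S \<longrightarrow> u \<in> S" using vS by blast
  from core[OF assms(1) path_rev[OF assms(2)] path_rev[OF assms(3)] a4 a5 a6 a7 a8 a9 a10 a11 assms(12) this]
  show ?thesis by auto
qed

end
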